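(* Let $M$ be a nonzero $\mathscr{D}(R,V)$-module. Either $\mathrm{Ann}_R(M) = (0)$ or $\mathrm{Ann}_R(M) = \pi^\ell R$ for some $\ell \geq 1$.
   Context: Let $(V, \pi V, k)$ be a DVR of mixed characteristic $(0,p)$ (i.e. $V$ has characteristic zero, maximal ideal generated by $\pi$, and residue field $k$ of characteristic $p>0$), and let $R$ be either $V[[x_1, \ldots, x_n]]$ or $V[x_1, \ldots, x_n]$ for some $n \geq 0$. $\mathscr{D}(R,V)$ denotes the ring of $V$-linear differential operators on $R$, and $\mathscr{D}(R,V)$-modules are left modules over it. *)

theory Defs
  imports Main "HOL-Library.Poly_Mapping"
begin

text \<open>Formal power series (and polynomials) in the variables x_0, ..., x_{n-1}
  over a coefficient ring 'v are encoded as coefficient functions on monomials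
  (exponent vectors, i.e. finitely supported nat-valued functions).\<close>

type_synonym 'v ser = "(nat \<Rightarrow>\<^sub>0 nat) \<Rightarrow> 'v"

definition PS :: "nat \<Rightarrow> ('v::zero) ser set" where
  "PS n = {f. \<forall>a. f a \<noteq> 0 \<longrightarrow> Poly_Mapping.keys a \<subseteq> {..<n}}"

definition MPolys :: "nat \<Rightarrow> ('v::zero) ser set" where
  "MPolys n = {f \<in> PS n. finite {a. f a \<noteq> 0}}"

definition ser_zero :: "('v::zero) ser" where
  "ser_zero = (\<lambda>_. 0)"

definition ser_add :: "('v::plus) ser \<Rightarrow> 'v ser \<Rightarrow> 'v ser" where
  "ser_add f g = (\<lambda>a. f a + g a)"

definition ser_mult :: "('v::comm_semiring_1) ser \<Rightarrow> 'v ser \<Rightarrow> 'v ser" where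
  "ser_mult f g = (\<lambda>a. \<Sum>(b, c)\<in>{(b, c). b + c = a}. f b * g c)"

definition ser_const :: "('v::zero) \<Rightarrow> 'v ser" where
  "ser_const c = (\<lambda>a. if a = 0 then c else 0)"

definition ser_smult :: "('v::times) \<Rightarrow> 'v ser \<Rightarrow> 'v ser" where
  "ser_smult c f = (\<lambda>a. c * f a)"

text \<open>Operators on R are functions on the coefficient-function type that vanish
  outside the carrier R (so that equality of operators is equality on R).\<close>

definition mult_op :: "('v::comm_semiring_1) ser set \<Rightarrow> 'v ser \<Rightarrow> ('v ser \<Rightarrow> 'v ser)" where
  "mult_op R r = (\<lambda>f. if f \<in> R then ser_mult r f else ser_zero)"

definition V_linear :: "('v::comm_semiring_1) ser set \<Rightarrow> ('v ser \<Rightarrow> 'v ser) \<Rightarrow> bool" where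
  "V_linear R \<delta> \<longleftrightarrow> \<delta> ` R \<subseteq> R
     \<and> (\<forall>f. f \<notin> R \<longrightarrow> \<delta> f = ser_zero)
     \<and> (\<forall>f\<in>R. \<forall>g\<in>R. \<delta> (ser_add f g) = ser_add (\<delta> f) (\<delta> g))
     \<and> (\<forall>c. \<forall>f\<in>R. \<delta> (ser_smult c f) = ser_smult c (\<delta> f))"

definition commutator :: "('v::comm_ring_1) ser set \<Rightarrow> ('v ser \<Rightarrow> 'v ser) \<Rightarrow> 'v ser \<Rightarrow> ('v ser \<Rightarrow> 'v ser)" where
  "commutator R \<delta> r = (\<lambda>f. if f \<in> R then (\<lambda>a. \<delta> (ser_mult r f) a - ser_mult r (\<delta> f) a) else ser_zero)"

fun diffops :: "('v::comm_ring_1) ser set \<Rightarrow> nat \<Rightarrow> ('v ser \<Rightarrow> 'v ser) set" where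
  "diffops R 0 = {mult_op R r | r. r \<in> R}"
| "diffops R (Suc m) = {\<delta>. V_linear R \<delta> \<and> (\<forall>r\<in>R. commutator R \<delta> r \<in> diffops R m)}"

definition DiffOps :: "('v::comm_ring_1) ser set \<Rightarrow> ('v ser \<Rightarrow> 'v ser) set" where
  "DiffOps R = (\<Union>m. diffops R m)"

definition D_module :: "('v::comm_ring_1) ser set \<Rightarrow> (('v ser \<Rightarrow> 'v ser) \<Rightarrow> 'm::ab_group_add \<Rightarrow> 'm) \<Rightarrow> bool" where
  "D_module R act \<longleftrightarrow>
     (\<forall>\<delta>\<in>DiffOps R. \<forall>x y. act \<delta> (x + y) = act \<delta> x + act \<delta> y)
   \<and> (\<forall>\<delta>\<in>DiffOps R. \<forall>\<delta>'\<in>DiffOps R. \<forall>x. act (\<lambda>f. ser_add (\<delta> f) (\<delta>' f)) x = act \<delta> x + act \<delta>' x)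
   \<and> (\<forall>\<delta>\<in>DiffOps R. \<forall>\<delta>'\<in>DiffOps R. \<forall>x. act (\<delta> \<circ> \<delta>') x = act \<delta> (act \<delta>' x))
   \<and> (\<forall>x. act (mult_op R (ser_const 1)) x = x)"

definition Ann_R :: "('v::comm_ring_1) ser set \<Rightarrow> (('v ser \<Rightarrow> 'v ser) \<Rightarrow> 'm::ab_group_add \<Rightarrow> 'm) \<Rightarrow> 'v ser set" where
  "Ann_R R act = {r \<in> R. \<forall>x. act (mult_op R r) x = 0}"

definition mixed_char_DVR :: "('v::idom) \<Rightarrow> bool" where
  "mixed_char_DVR \<pi> \<longleftrightarrow> \<pi> \<noteq> 0 \<and> \<not> \<pi> dvd 1
     \<and> (\<forall>x. x \<noteq> 0 \<longrightarrow> (\<exists>u k. u dvd 1 \<and> x = u * \<pi> ^ k))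
     \<and> (\<forall>n::nat. of_nat n = (0::'v) \<longrightarrow> n = 0)
     \<and> (\<exists>p::nat. p > 0 \<and> \<pi> dvd of_nat p)"

end

theory Submission
  imports Defs "HOL-Computational_Algebra.Formal_Power_Series"
begin

type_synonym mono = "nat \<Rightarrow>\<^sub>0 nat"
abbreviation pkeys where "pkeys \<equiv> Poly_Mapping.keys"
abbreviation lk where "lk \<equiv> Poly_Mapping.lookup"
definition conv :: "mono \<Rightarrow> (mono \<times> mono) set" where
  "conv a = {(b, c). b + c = a}"

lemma conv_finite: fixes a :: "nat \<Rightarrow>\<^sub>0 nat" shows "finite (conv a)"
proof -
  define M :: nat where "M = (\<Sum>i\<in>pkeys a. lk a i)"
  define S :: "(nat \<Rightarrow> nat) set" where "S = {f::nat\<Rightarrow>nat. \<forall>x. (x \<in> pkeys a \<longrightarrow> f x \<in> {..M}) \<and> (x \<notin> pkeys a \<longrightarrow> f x = 0)}"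
  have fS: "finite S" unfolding S_def by (rule finite_set_of_finite_funs) auto
  have "{b. \<exists>c. b + c = a} \<subseteq> {b. lk b \<in> S}"
  proof
    fix b assume "b \<in> {b. \<exists>c. b + c = a}"
    then obtain c where bc: "b + c = a" by auto
    have "lk b x \<le> lk a x" for x using bc by (auto simp: lookup_add)
    moreover have "lk a x \<le> M" if "x \<in> pkeys a" for x
      unfolding M_def using that by (intro member_le_sum) auto
    moreover have "lk a x = 0" if "x \<notin> pkeys a" for x using that by (simp add: in_keys_iff)
    ultimately have "\<forall>x. (x \<in> pkeys a \<longrightarrow> lk b x \<in> {..M}) \<and> (x \<notin> pkeys a \<longrightarrow> lk b x = 0)"
      by (metis atMost_iff le_zero_eq order_trans)
    then show "b \<in> {b. lk b \<in> S}" unfolding S_def by simp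
  qed
  moreover have "finite {b. lk b \<in> S}"
    using finite_vimageI[OF fS, of lk] by (simp add: vimage_def inj_def poly_mapping_eqI lookup_inject)
  ultimately have fB: "finite {b. \<exists>c. b + c = a}" by (rule finite_subset)
  have "conv a \<subseteq> (\<lambda>b. (b, a - b)) ` {b. \<exists>c. b + c = a}"
    unfolding conv_def by (auto simp: image_iff)
  then show ?thesis using fB by (meson finite_imageI finite_subset)
qed
lemma conv_mem[simp]: "(p \<in> conv a) = (fst p + snd p = a)"
  by (cases p) (simp add: conv_def)

lemma ser_mult_alt: "ser_mult f g a = (\<Sum>p\<in>conv a. f (fst p) * g (snd p))"
  by (simp add: ser_mult_def conv_def split_def)

lemma ser_mult_comm: "ser_mult f g = ser_mult (g::'v::comm_semiring_1 ser) f"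
proof
  fix a
  show "ser_mult f g a = ser_mult g f a"
    unfolding ser_mult_alt
    by (rule sum.reindex_bij_witness[where i=prod.swap and j=prod.swap])
       (auto simp: add.commute mult.commute)
qed

lemma ser_mult_const_left: "ser_mult (ser_const c) f = ser_smult (c::'v::comm_semiring_1) f"
proof
  fix a
  have "ser_mult (ser_const c) f a = (\<Sum>p\<in>conv a. ser_const c (fst p) * f (snd p))"
    by (rule ser_mult_alt)
  also have "\<dots> = ser_const c (fst (0,a)) * f (snd (0,a)) + (\<Sum>p\<in>conv a - {(0,a)}. ser_const c (fst p) * f (snd p))"
    using sum.remove[OF conv_finite, of "(0,a)" a "\<lambda>p. ser_const c (fst p) * f (snd p)"] by (simp only: conv_mem fst_conv snd_conv add_0)
  also have "(\<Sum>p\<in>conv a - {(0,a)}. ser_const c (fst p) * f (snd p)) = 0"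
    by (rule sum.neutral) (auto simp: ser_const_def)
  finally show "ser_mult (ser_const c) f a = ser_smult c f a"
    by (simp add: ser_const_def ser_smult_def)
qed

lemma ser_mult_const_right: "ser_mult f (ser_const c) = ser_smult (c::'v::comm_semiring_1) f"
  using ser_mult_comm ser_mult_const_left by metis

lemma ser_mult_add_right: "ser_mult r (ser_add f g) = ser_add (ser_mult r f) (ser_mult (r::'v::comm_semiring_1 ser) g)"
  by (rule ext) (simp add: ser_mult_alt ser_add_def distrib_left sum.distrib)

lemma ser_mult_add_left: "ser_mult (ser_add f g) r = ser_add (ser_mult f r) (ser_mult g (r::'v::comm_semiring_1 ser))"
  using ser_mult_add_right ser_mult_comm by metis

lemma ser_mult_diff_right: "ser_mult r (\<lambda>a. f a - g a) = (\<lambda>a. ser_mult r f a - ser_mult (r::'v::comm_ring_1 ser) g a)"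
  by (rule ext) (simp add: ser_mult_alt right_diff_distrib sum_subtractf)

lemma ser_mult_zero_right[simp]: "ser_mult r ser_zero = (ser_zero::'v::comm_semiring_1 ser)"
  by (rule ext) (simp add: ser_mult_alt ser_zero_def)

lemma ser_mult_zero_left[simp]: "ser_mult ser_zero r = (ser_zero::'v::comm_semiring_1 ser)"
  by (rule ext) (simp add: ser_mult_alt ser_zero_def)

lemma ser_mult_smult_right: "ser_mult r (ser_smult c f) = ser_smult c (ser_mult r (f::'v::comm_semiring_1 ser))"
  by (rule ext) (simp add: ser_mult_alt ser_smult_def sum_distrib_left mult.left_commute)

lemma ser_mult_assoc: "ser_mult (ser_mult f g) h = ser_mult f (ser_mult g (h::'v::comm_semiring_1 ser))"
proof
  fix a
  have "ser_mult (ser_mult f g) h a = (\<Sum>p\<in>conv a. \<Sum>q\<in>conv (fst p). f (fst q) * g (snd q) * h (snd p))"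
    by (simp add: ser_mult_alt sum_distrib_right)
  also have "\<dots> = (\<Sum>pq\<in>Sigma (conv a) (\<lambda>p. conv (fst p)). f (fst (snd pq)) * g (snd (snd pq)) * h (snd (fst pq)))"
    by (subst sum.Sigma) (auto simp: conv_finite split_def)
  also have "\<dots> = (\<Sum>pq\<in>Sigma (conv a) (\<lambda>p. conv (snd p)). f (fst (fst pq)) * (g (fst (snd pq)) * h (snd (snd pq))))"
    by (rule sum.reindex_bij_witness[where
          i="\<lambda>((d,b'),(e,c)). ((d+e, c), (d, e))" and j="\<lambda>((b,c),(d,e)). ((d, e+c), (e, c))"])
       (auto simp: add.assoc mult.assoc)
  also have "\<dots> = (\<Sum>p\<in>conv a. \<Sum>q\<in>conv (snd p). f (fst p) * (g (fst q) * h (snd q)))"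
    by (subst sum.Sigma) (auto simp: conv_finite split_def)
  also have "\<dots> = ser_mult f (ser_mult g h) a"
    by (simp add: ser_mult_alt sum_distrib_left)
  finally show "ser_mult (ser_mult f g) h a = ser_mult f (ser_mult g h) a" .
qed

definition dp :: "nat \<Rightarrow> nat \<Rightarrow> ('v::comm_semiring_1) ser \<Rightarrow> 'v ser" where
  "dp i k f = (\<lambda>c. of_nat ((lk c i + k) choose k) * f (c + Poly_Mapping.single i k))"

definition sring :: "('v::comm_ring_1) ser set \<Rightarrow> bool" where
  "sring R \<longleftrightarrow> (\<forall>c. ser_const c \<in> R) \<and> (\<forall>f\<in>R. \<forall>g\<in>R. ser_add f g \<in> R \<and> ser_mult f g \<in> R)
     \<and> (\<forall>c. \<forall>f\<in>R. ser_smult c f \<in> R) \<and> (\<forall>i k. \<forall>f\<in>R. dp i k f \<in> R)"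

lemma ser_zero_const: "ser_zero = ser_const 0"
  by (auto simp: ser_zero_def ser_const_def)

lemma keys_le_add: "pkeys (c::nat \<Rightarrow>\<^sub>0 nat) \<subseteq> pkeys (c + d)"
  by (auto simp: in_keys_iff lookup_add)

lemma sum_nz: assumes "(\<Sum>p\<in>conv a. F p) \<noteq> (0::'v::comm_monoid_add)" obtains p where "p \<in> conv a" "F p \<noteq> 0"
  using assms sum.not_neutral_contains_not_neutral by blast

lemma sring_PS: "sring (PS n :: ('v::comm_ring_1) ser set)"
proof -
  have mult: "ser_mult f g \<in> PS n" if "f \<in> PS n" "g \<in> PS n" for f g :: "'v ser"
    unfolding PS_def
  proof (intro CollectI allI impI)
    fix a assume "ser_mult f g a \<noteq> 0"
    then obtain p where p: "p \<in> conv a" "f (fst p) * g (snd p) \<noteq> 0"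
      unfolding ser_mult_alt by (rule sum_nz)
    then have "f (fst p) \<noteq> 0" "g (snd p) \<noteq> 0" by auto
    then have "pkeys (fst p) \<subseteq> {..<n}" "pkeys (snd p) \<subseteq> {..<n}" using that by (auto simp: PS_def)
    moreover have "a = fst p + snd p" using p by simp
    ultimately show "pkeys a \<subseteq> {..<n}" using keys_add[of "fst p" "snd p"] by blast
  qed
  have dpc: "dp i k f \<in> PS n" if "f \<in> PS n" for f :: "'v ser" and i k
    unfolding PS_def
  proof (intro CollectI allI impI)
    fix c assume "dp i k f c \<noteq> 0"
    then have "f (c + Poly_Mapping.single i k) \<noteq> 0" by (auto simp: dp_def)
    then have "pkeys (c + Poly_Mapping.single i k) \<subseteq> {..<n}" using that by (auto simp: PS_def)
    then show "pkeys c \<subseteq> {..<n}" using keys_le_add by blast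
  qed
  show ?thesis unfolding sring_def
  proof (intro conjI allI ballI)
    fix c :: 'v show "ser_const c \<in> PS n" by (auto simp: PS_def ser_const_def)
  next
    fix f g :: "'v ser" assume "f \<in> PS n" "g \<in> PS n"
    note fg = this
    show "ser_mult f g \<in> PS n" using mult fg by blast
    show "ser_add f g \<in> PS n" unfolding ser_add_def PS_def
    proof (intro CollectI allI impI)
      fix a assume "f a + g a \<noteq> 0"
      then have "f a \<noteq> 0 \<or> g a \<noteq> 0" by auto
      then show "pkeys a \<subseteq> {..<n}" using fg unfolding PS_def by blast
    qed
  next
    fix c :: 'v and f :: "'v ser" assume fP: "f \<in> PS n"
    show "ser_smult c f \<in> PS n" unfolding ser_smult_def PS_def
    proof (intro CollectI allI impI)
      fix a assume "c * f a \<noteq> 0"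
      then have "f a \<noteq> 0" by auto
      then show "pkeys a \<subseteq> {..<n}" using fP unfolding PS_def by blast
    qed
  next
    fix i k and f :: "'v ser" assume "f \<in> PS n"
    then show "dp i k f \<in> PS n" by (rule dpc)
  qed
qed

lemma sring_MPolys: "sring (MPolys n :: ('v::comm_ring_1) ser set)"
proof -
  have PS: "sring (PS n :: 'v ser set)" by (rule sring_PS)
  have mult: "finite {a. ser_mult f g a \<noteq> 0}" if "finite {a. f a \<noteq> 0}" "finite {a. g a \<noteq> 0}" for f g :: "'v ser"
  proof -
    have "{a. ser_mult f g a \<noteq> 0} \<subseteq> (\<lambda>p. fst p + snd p) ` ({a. f a \<noteq> 0} \<times> {a. g a \<noteq> 0})"
    proof
      fix a assume "a \<in> {a. ser_mult f g a \<noteq> 0}"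
      then obtain p where p: "p \<in> conv a" "f (fst p) * g (snd p) \<noteq> 0"
        unfolding ser_mult_alt by (auto elim: sum_nz)
      then show "a \<in> (\<lambda>p. fst p + snd p) ` ({a. f a \<noteq> 0} \<times> {a. g a \<noteq> 0})"
        by (auto intro!: image_eqI[of _ _ p] simp: mem_Times_iff)
    qed
    then show ?thesis using that by (meson finite_SigmaI finite_imageI finite_subset)
  qed
  have add: "finite {a. ser_add f g a \<noteq> 0}" if "finite {a. f a \<noteq> 0}" "finite {a. g a \<noteq> 0}" for f g :: "'v ser"
    by (rule finite_subset[of _ "{a. f a \<noteq> 0} \<union> {a. g a \<noteq> 0}"]) (use that in \<open>auto simp: ser_add_def\<close>)
  have sm: "finite {a. ser_smult c f a \<noteq> 0}" if "finite {a. f a \<noteq> 0}" for f :: "'v ser" and c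
    by (rule finite_subset[of _ "{a. f a \<noteq> 0}"]) (use that in \<open>auto simp: ser_smult_def\<close>)
  have cst: "finite {a. ser_const c a \<noteq> (0::'v)}" for c
    by (rule finite_subset[of _ "{0}"]) (auto simp: ser_const_def)
  have dpc: "finite {a. dp i k f a \<noteq> 0}" if "finite {a. f a \<noteq> 0}" for f :: "'v ser" and i k
  proof -
    have "{a. dp i k f a \<noteq> 0} \<subseteq> (\<lambda>c. c + Poly_Mapping.single i k) -` {a. f a \<noteq> 0}"
      by (auto simp: dp_def)
    moreover have "finite ((\<lambda>c. c + Poly_Mapping.single i k) -` {a. f a \<noteq> 0})"
      by (rule finite_vimageI) (use that in \<open>auto simp: inj_def\<close>)
    ultimately show ?thesis by (rule finite_subset)
  qed
  have P1: "ser_const c \<in> PS n" for c :: 'v using PS unfolding sring_def by blast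
  have P2: "ser_add f g \<in> PS n" "ser_mult f g \<in> PS n" if "f \<in> PS n" "g \<in> PS n" for f g :: "'v ser"
    using PS that unfolding sring_def by blast+
  have P3: "ser_smult c f \<in> PS n" if "f \<in> PS n" for c and f :: "'v ser"
    using PS that unfolding sring_def by blast
  have P4: "dp i k f \<in> PS n" if "f \<in> PS n" for i k and f :: "'v ser"
    using PS that unfolding sring_def by blast
  show ?thesis unfolding sring_def
  proof (intro conjI allI ballI)
    fix c :: 'v show "ser_const c \<in> MPolys n" unfolding MPolys_def using P1 cst by blast
  next
    fix f g :: "'v ser" assume f: "f \<in> MPolys n" and g: "g \<in> MPolys n"
    show "ser_add f g \<in> MPolys n"
      using P2(1) add f g unfolding MPolys_def by blast
    show "ser_mult f g \<in> MPolys n"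
      using P2(2) mult f g unfolding MPolys_def by blast
  next
    fix c :: 'v and f :: "'v ser" assume f: "f \<in> MPolys n"
    show "ser_smult c f \<in> MPolys n" using P3 sm f unfolding MPolys_def by blast
  next
    fix i k and f :: "'v ser" assume f: "f \<in> MPolys n"
    show "dp i k f \<in> MPolys n" using P4 dpc f unfolding MPolys_def by blast
  qed
qed


abbreviation sg :: "nat \<Rightarrow> nat \<Rightarrow> nat \<Rightarrow>\<^sub>0 nat" where "sg \<equiv> Poly_Mapping.single"

lemma lk_sg: "lk (sg i j) x = (if x = i then j else 0)"
  by (simp add: lookup_single when_def)

lemma lk_add_sg: "lk (a + sg i j) i = lk a i + j"
  by (simp add: lookup_add)

lemma lk_sub_sg: "lk (a - sg i j) i = lk a i - j"
  by (simp add: lookup_minus)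

lemma pm_sub_add: "j \<le> lk a i \<Longrightarrow> (a - sg i j) + sg i j = (a::nat \<Rightarrow>\<^sub>0 nat)"
  by (rule poly_mapping_eqI) (auto simp: lookup_add lookup_minus lk_sg)

lemma pm_add_sub: "(a + sg i j) - sg i j = (a::nat \<Rightarrow>\<^sub>0 nat)"
  by (rule poly_mapping_eqI) (auto simp: lookup_add lookup_minus lk_sg)

lemma leibniz_coeff:
  fixes r f :: "('v::comm_semiring_1) ser"
  shows "dp i k (ser_mult r f) c = (\<Sum>j\<le>k. ser_mult (dp i j r) (dp i (k-j) f) c)"
proof -
  define G where "G = (\<lambda>(j::nat, q::(nat \<Rightarrow>\<^sub>0 nat) \<times> (nat \<Rightarrow>\<^sub>0 nat)).
     (of_nat ((lk (fst q) i + j) choose j) * r (fst q + sg i j)) *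
     (of_nat ((lk (snd q) i + (k - j)) choose (k - j)) * f (snd q + sg i (k - j))))"
  define H where "H = (\<lambda>(j::nat, p::(nat \<Rightarrow>\<^sub>0 nat) \<times> (nat \<Rightarrow>\<^sub>0 nat)).
     of_nat ((lk (fst p) i choose j) * (lk (snd p) i choose (k - j))) * (r (fst p) * f (snd p)) :: 'v)"
  define Q where "Q = {(j, p). j \<le> k \<and> p \<in> conv (c + sg i k) \<and> j \<le> lk (fst p) i \<and> k - j \<le> lk (snd p) i}"
  have "(\<Sum>j\<le>k. ser_mult (dp i j r) (dp i (k-j) f) c) = (\<Sum>j\<le>k. \<Sum>q\<in>conv c. G (j, q))"
    by (simp add: ser_mult_alt dp_def G_def)
  also have "\<dots> = (\<Sum>jq\<in>Sigma {..k} (\<lambda>_. conv c). G jq)"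
    by (subst sum.Sigma) (auto simp: conv_finite)
  also have "\<dots> = (\<Sum>jp\<in>Q. H jp)"
  proof (rule sum.reindex_bij_witness[where i="\<lambda>(j, p). (j, (fst p - sg i j, snd p - sg i (k - j)))"
        and j="\<lambda>(j, q). (j, (fst q + sg i j, snd q + sg i (k - j)))"])
    fix a assume "a \<in> Sigma {..k} (\<lambda>_. conv c)"
    then show "(case case a of (j, q) \<Rightarrow> (j, fst q + sg i j, snd q + sg i (k - j)) of
          (j, p) \<Rightarrow> (j, fst p - sg i j, snd p - sg i (k - j))) = a"
      by (auto simp: pm_add_sub)
  next
    fix a assume a: "a \<in> Sigma {..k} (\<lambda>_. conv c)"
    obtain j b d where abd: "a = (j, (b, d))" by (cases a) auto
    have jk: "j \<le> k" and bd: "b + d = c" using a abd by auto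
    have "b + sg i j + (d + sg i (k - j)) = c + sg i k"
      using jk bd by (auto simp: single_add[symmetric] ac_simps)
    then show "(case a of (j, q) \<Rightarrow> (j, fst q + sg i j, snd q + sg i (k - j))) \<in> Q"
      using abd jk by (simp add: Q_def lookup_add)
  next
    fix b assume "b \<in> Q"
    then show "(case case b of (j, p) \<Rightarrow> (j, fst p - sg i j, snd p - sg i (k - j)) of
          (j, q) \<Rightarrow> (j, fst q + sg i j, snd q + sg i (k - j))) = b"
      by (auto simp: Q_def pm_sub_add)
  next
    fix b assume b: "b \<in> Q"
    obtain j u v where b': "b = (j, (u, v))" by (cases b) auto
    have h: "j \<le> k" "u + v = c + sg i k" "j \<le> lk u i" "k - j \<le> lk v i" using b b' by (auto simp: Q_def)
    have "u - sg i j + (v - sg i (k - j)) = c"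
    proof (rule poly_mapping_eqI)
      fix x
      have e: "lk u x + lk v x = lk c x + (if x = i then k else 0)"
        using arg_cong[OF h(2), of "\<lambda>p. lk p x"] by (simp add: lookup_add lk_sg)
      show "lk (u - sg i j + (v - sg i (k - j))) x = lk c x"
        using h e by (auto simp: lookup_add lookup_minus lk_sg)
    qed
    then show "(case b of (j, p) \<Rightarrow> (j, fst p - sg i j, snd p - sg i (k - j))) \<in> Sigma {..k} (\<lambda>_. conv c)"
      using b' h by simp
  next
    fix a assume a: "a \<in> Sigma {..k} (\<lambda>_. conv c)"
    obtain j b d where abd: "a = (j, (b, d))" by (cases a) auto
    show "H (case a of (j, q) \<Rightarrow> (j, fst q + sg i j, snd q + sg i (k - j))) = G a"
      using abd by (simp add: H_def G_def lookup_add pm_add_sub ac_simps)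
  qed
  also have "\<dots> = (\<Sum>jp\<in>{..k} \<times> conv (c + sg i k). H jp)"
  proof (rule sum.mono_neutral_left)
    show "finite ({..k} \<times> conv (c + sg i k))" by (simp add: conv_finite)
    show "Q \<subseteq> {..k} \<times> conv (c + sg i k)" by (auto simp: Q_def)
    show "\<forall>x\<in>{..k} \<times> conv (c + sg i k) - Q. H x = 0"
    proof
      fix x assume x: "x \<in> {..k} \<times> conv (c + sg i k) - Q"
      obtain j u v where x': "x = (j, (u, v))" by (cases x) auto
      have "\<not> j \<le> lk u i \<or> \<not> k - j \<le> lk v i" using x x' by (auto simp: Q_def)
      then have z: "(lk u i choose j) * (lk v i choose (k - j)) = 0"
        by (auto simp: binomial_eq_0 not_le)
      show "H x = 0" unfolding H_def x' by (simp only: case_prod_conv fst_conv snd_conv z of_nat_0 mult_zero_left)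
    qed
  qed
  also have "\<dots> = (\<Sum>p\<in>conv (c + sg i k). \<Sum>j\<le>k. H (j, p))"
    by (subst sum.swap[symmetric]) (simp add: sum.cartesian_product)
  also have "\<dots> = (\<Sum>p\<in>conv (c + sg i k). of_nat ((lk c i + k) choose k) * (r (fst p) * f (snd p)))"
  proof (rule sum.cong[OF refl])
    fix p assume p: "p \<in> conv (c + sg i k)"
    have "lk (fst p) i + lk (snd p) i = lk c i + k"
      using p by (metis conv_mem lk_add_sg lookup_add)
    then have "(\<Sum>j\<le>k. (lk (fst p) i choose j) * (lk (snd p) i choose (k - j))) = (lk c i + k) choose k"
      using binomial_Vandermonde[of "lk (fst p) i" "lk (snd p) i" k] by (simp add: atLeast0AtMost)
    then have V: "(\<Sum>j\<le>k. of_nat (lk (fst p) i choose j) * of_nat (lk (snd p) i choose (k - j))) = (of_nat ((lk c i + k) choose k) :: 'v)"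
      by (metis (no_types, lifting) of_nat_mult of_nat_sum sum.cong)
    show "(\<Sum>j\<le>k. H (j, p)) = of_nat ((lk c i + k) choose k) * (r (fst p) * f (snd p))"
      unfolding H_def by (simp add: sum_distrib_right[symmetric] V)
  qed
  also have "\<dots> = dp i k (ser_mult r f) c"
    by (simp add: dp_def ser_mult_alt sum_distrib_left)
  finally show ?thesis by simp
qed


definition opadd :: "('v::plus ser \<Rightarrow> 'v ser) \<Rightarrow> ('v ser \<Rightarrow> 'v ser) \<Rightarrow> ('v ser \<Rightarrow> 'v ser)" where
  "opadd d d' = (\<lambda>f. ser_add (d f) (d' f))"

definition opsum :: "'j set \<Rightarrow> ('j \<Rightarrow> ('v::comm_monoid_add ser \<Rightarrow> 'v ser)) \<Rightarrow> ('v ser \<Rightarrow> 'v ser)" where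
  "opsum S F = (\<lambda>f a. \<Sum>j\<in>S. F j f a)"

definition Dop :: "('v::comm_ring_1) ser set \<Rightarrow> nat \<Rightarrow> nat \<Rightarrow> ('v ser \<Rightarrow> 'v ser)" where
  "Dop R i k = (\<lambda>f. if f \<in> R then dp i k f else ser_zero)"

lemma dp_add: "dp i k (ser_add f g) = ser_add (dp i k f) (dp i k (g::'v::comm_semiring_1 ser))"
  by (rule ext) (simp add: dp_def ser_add_def distrib_left)

lemma dp_smult: "dp i k (ser_smult c f) = ser_smult c (dp i k (f::'v::comm_semiring_1 ser))"
  by (rule ext) (simp add: dp_def ser_smult_def mult.left_commute)

lemma dp_zero[simp]: "dp i k ser_zero = (ser_zero::'v::comm_semiring_1 ser)"
  by (rule ext) (simp add: dp_def ser_zero_def)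

lemma dp_0[simp]: "dp i 0 f = (f::'v::comm_semiring_1 ser)"
  by (rule ext) (simp add: dp_def)

context
  fixes R :: "('v::comm_ring_1) ser set"
  assumes sR: "sring R"
begin

lemma sR_const: "ser_const c \<in> R" using sR by (simp add: sring_def)
lemma sR_zero: "ser_zero \<in> R" using sR_const[of 0] by (simp add: ser_zero_const)
lemma sR_add: "f \<in> R \<Longrightarrow> g \<in> R \<Longrightarrow> ser_add f g \<in> R" using sR by (simp add: sring_def)
lemma sR_mult: "f \<in> R \<Longrightarrow> g \<in> R \<Longrightarrow> ser_mult f g \<in> R" using sR by (simp add: sring_def)
lemma sR_smult: "f \<in> R \<Longrightarrow> ser_smult c f \<in> R" using sR by (simp add: sring_def)
lemma sR_dp: "f \<in> R \<Longrightarrow> dp i k f \<in> R" using sR by (simp add: sring_def)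
lemma sR_diff: "f \<in> R \<Longrightarrow> g \<in> R \<Longrightarrow> (\<lambda>a. f a - g a) \<in> R"
proof -
  assume "f \<in> R" "g \<in> R"
  then have "ser_add f (ser_smult (-1) g) \<in> R" by (simp add: sR_add sR_smult)
  moreover have "ser_add f (ser_smult (-1) g) = (\<lambda>a. f a - g a)"
    by (rule ext) (simp add: ser_add_def ser_smult_def)
  ultimately show ?thesis by simp
qed

lemma mult_op_in: "f \<in> R \<Longrightarrow> mult_op R s f = ser_mult s f" by (simp add: mult_op_def)
lemma mult_op_out: "f \<notin> R \<Longrightarrow> mult_op R s f = ser_zero" by (simp add: mult_op_def)
lemma mult_op_zero_arg[simp]: "mult_op R s ser_zero = ser_zero" by (simp add: mult_op_def)

lemma Vlin_mult: "s \<in> R \<Longrightarrow> V_linear R (mult_op R s)"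
  unfolding V_linear_def
  by (auto simp: mult_op_def sR_mult sR_add sR_smult ser_mult_add_right ser_mult_smult_right)

lemma Vlin_zero: "V_linear R d \<Longrightarrow> d ser_zero = ser_zero"
proof -
  assume V: "V_linear R d"
  have "d (ser_add ser_zero ser_zero) = ser_add (d ser_zero) (d ser_zero)"
    using V sR_zero by (simp add: V_linear_def)
  moreover have "ser_add ser_zero ser_zero = (ser_zero :: 'v ser)" by (simp add: ser_add_def ser_zero_def)
  ultimately have "d ser_zero = ser_add (d ser_zero) (d ser_zero)" by simp
  then have "\<forall>a. d ser_zero a = d ser_zero a + d ser_zero a" by (metis ser_add_def)
  then show ?thesis by (auto simp: ser_zero_def)
qed

lemma Vlin_in: "V_linear R d \<Longrightarrow> f \<in> R \<Longrightarrow> d f \<in> R" by (auto simp: V_linear_def)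
lemma Vlin_out: "V_linear R d \<Longrightarrow> f \<notin> R \<Longrightarrow> d f = ser_zero" by (auto simp: V_linear_def)

lemma diffops_Vlin: "d \<in> diffops R m \<Longrightarrow> V_linear R d"
  by (cases m) (auto simp: Vlin_mult)

lemma mult_op_diffops0: "s \<in> R \<Longrightarrow> mult_op R s \<in> diffops R 0" by auto

lemma comm_mult_op: "s \<in> R \<Longrightarrow> r \<in> R \<Longrightarrow> commutator R (mult_op R s) r = mult_op R ser_zero"
proof (rule ext)
  fix f assume s: "s \<in> R" and r: "r \<in> R"
  show "commutator R (mult_op R s) r f = mult_op R ser_zero f"
  proof (cases "f \<in> R")
    case True
    then have "ser_mult s (ser_mult r f) = ser_mult r (ser_mult s f)"
      by (metis ser_mult_assoc ser_mult_comm)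
    then show ?thesis using True r s
      by (simp add: commutator_def mult_op_in sR_mult) (simp add: ser_zero_def)
  next
    case False then show ?thesis by (simp add: commutator_def mult_op_out)
  qed
qed

lemma diffops_Suc: "d \<in> diffops R m \<Longrightarrow> d \<in> diffops R (Suc m)"
proof (induction m arbitrary: d)
  case 0
  then obtain s where s: "s \<in> R" "d = mult_op R s" by auto
  then show ?case using comm_mult_op Vlin_mult sR_zero by auto
next
  case (Suc m)
  then show ?case by auto
qed

lemma diffops_mono: "m \<le> m' \<Longrightarrow> d \<in> diffops R m \<Longrightarrow> d \<in> diffops R m'"
proof (induction m' rule: dec_induct)
  case base then show ?case .
next
  case (step k) then show ?case using diffops_Suc by blast
qed

lemma zero_op: "mult_op R ser_zero = (\<lambda>f. ser_zero)"
  by (rule ext) (simp add: mult_op_def)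

lemma diffops_add: "d \<in> diffops R m \<Longrightarrow> d' \<in> diffops R m \<Longrightarrow> opadd d d' \<in> diffops R m"
proof (induction m arbitrary: d d')
  case 0
  then obtain s s' where s: "s \<in> R" "d = mult_op R s" "s' \<in> R" "d' = mult_op R s'" by auto
  have "opadd d d' = mult_op R (ser_add s s')"
  proof (rule ext)
    fix f show "opadd d d' f = mult_op R (ser_add s s') f"
    proof (cases "f \<in> R")
      case True then show ?thesis by (simp add: opadd_def s mult_op_def ser_mult_add_left)
    next
      case False then show ?thesis by (simp add: opadd_def s mult_op_def ser_add_def ser_zero_def)
    qed
  qed
  then show ?case using s sR_add by auto
next
  case (Suc m)
  have V: "V_linear R d" "V_linear R d'" using Suc.prems by (auto intro: diffops_Vlin)
  have "V_linear R (opadd d d')"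
    unfolding V_linear_def
  proof (intro conjI allI impI ballI)
    show "opadd d d' ` R \<subseteq> R" using V by (auto simp: opadd_def Vlin_in sR_add)
  next
    fix f assume "f \<notin> R" then show "opadd d d' f = ser_zero"
      using V by (simp add: opadd_def Vlin_out ser_add_def ser_zero_def)
  next
    fix f g assume fg: "f \<in> R" "g \<in> R"
    then show "opadd d d' (ser_add f g) = ser_add (opadd d d' f) (opadd d d' g)"
      using V by (auto simp: opadd_def V_linear_def ser_add_def add_ac)
  next
    fix c f assume "f \<in> R"
    then show "opadd d d' (ser_smult c f) = ser_smult c (opadd d d' f)"
      using V by (auto simp: opadd_def V_linear_def ser_add_def ser_smult_def distrib_left)
  qed
  moreover have "commutator R (opadd d d') r \<in> diffops R m" if r: "r \<in> R" for r
  proof -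
    have "commutator R (opadd d d') r = opadd (commutator R d r) (commutator R d' r)"
    proof (rule ext)
      fix f show "commutator R (opadd d d') r f = opadd (commutator R d r) (commutator R d' r) f"
      proof (cases "f \<in> R")
        case True
        then show ?thesis
          by (simp add: commutator_def opadd_def ser_mult_add_right) (simp add: ser_add_def algebra_simps)
      next
        case False then show ?thesis by (simp add: commutator_def opadd_def ser_add_def ser_zero_def)
      qed
    qed
    then show ?thesis using Suc.IH Suc.prems r by auto
  qed
  ultimately show ?case by simp
qed

lemma diffops_opsum: "finite S \<Longrightarrow> (\<forall>j\<in>S. F j \<in> diffops R m) \<Longrightarrow> opsum S F \<in> diffops R m"
proof (induction S rule: finite_induct)
  case empty
  have "opsum {} F = mult_op R ser_zero" unfolding zero_op by (simp add: opsum_def ser_zero_def)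
  then show ?case using sR_zero diffops_mono[of 0 m] by auto
next
  case (insert x S)
  have "opsum (insert x S) F = opadd (F x) (opsum S F)"
    using insert.hyps by (auto simp: opsum_def opadd_def ser_add_def)
  then show ?case using insert diffops_add by auto
qed

lemma diffops_lmult: "s \<in> R \<Longrightarrow> d \<in> diffops R m \<Longrightarrow> mult_op R s \<circ> d \<in> diffops R m"
proof (induction m arbitrary: d)
  case 0
  then obtain r where r: "r \<in> R" "d = mult_op R r" by auto
  have "mult_op R s \<circ> d = mult_op R (ser_mult s r)"
  proof (rule ext)
    fix f show "(mult_op R s \<circ> d) f = mult_op R (ser_mult s r) f"
      using r by (cases "f \<in> R") (simp_all add: mult_op_def sR_mult ser_mult_assoc)
  qed
  then show ?case using r 0 sR_mult by auto
next
  case (Suc m)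
  have V: "V_linear R d" using Suc.prems by (auto intro: diffops_Vlin)
  have "V_linear R (mult_op R s \<circ> d)"
    unfolding V_linear_def
  proof (intro conjI allI impI ballI)
    show "(mult_op R s \<circ> d) ` R \<subseteq> R" using V Suc.prems by (auto simp: mult_op_in Vlin_in sR_mult)
  next
    fix f assume "f \<notin> R" then show "(mult_op R s \<circ> d) f = ser_zero"
      using V by (simp add: Vlin_out)
  next
    fix f g assume fg: "f \<in> R" "g \<in> R"
    then have "d (ser_add f g) = ser_add (d f) (d g)" using V by (simp add: V_linear_def)
    then show "(mult_op R s \<circ> d) (ser_add f g) = ser_add ((mult_op R s \<circ> d) f) ((mult_op R s \<circ> d) g)"
      using V fg by (simp add: mult_op_in Vlin_in sR_add ser_mult_add_right)
  next
    fix c f assume f: "f \<in> R"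
    then have "d (ser_smult c f) = ser_smult c (d f)" using V by (simp add: V_linear_def)
    then show "(mult_op R s \<circ> d) (ser_smult c f) = ser_smult c ((mult_op R s \<circ> d) f)"
      using V f by (simp add: mult_op_in Vlin_in sR_smult ser_mult_smult_right)
  qed
  moreover have "commutator R (mult_op R s \<circ> d) r \<in> diffops R m" if r: "r \<in> R" for r
  proof -
    have eq: "commutator R (mult_op R s \<circ> d) r = mult_op R s \<circ> commutator R d r"
    proof (rule ext)
      fix f show "commutator R (mult_op R s \<circ> d) r f = (mult_op R s \<circ> commutator R d r) f"
      proof (cases "f \<in> R")
        case True
        have in1: "d (ser_mult r f) \<in> R" "d f \<in> R" using V True r by (auto simp: Vlin_in sR_mult)
        have sw: "ser_mult r (ser_mult s (d f)) = ser_mult s (ser_mult r (d f))"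
          by (metis ser_mult_assoc ser_mult_comm)
        have "(\<lambda>a. d (ser_mult r f) a - ser_mult r (d f) a) \<in> R"
          using in1 r by (simp add: sR_diff sR_mult)
        then show ?thesis using True in1 r
          by (simp add: commutator_def mult_op_in sR_mult ser_mult_diff_right sw)
      next
        case False then show ?thesis by (simp add: commutator_def)
      qed
    qed
    have cm: "commutator R d r \<in> diffops R m" using Suc.prems r by auto
    show ?thesis unfolding eq by (rule Suc.IH[OF Suc.prems(1) cm])
  qed
  ultimately show ?case by (simp only: diffops.simps mem_Collect_eq) blast
qed

lemma Dop_in: "f \<in> R \<Longrightarrow> Dop R i k f = dp i k f" by (simp add: Dop_def)
lemma Dop_out: "f \<notin> R \<Longrightarrow> Dop R i k f = ser_zero" by (simp add: Dop_def)

lemma Dop_0: "Dop R i 0 = mult_op R (ser_const 1)"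
  by (rule ext) (simp add: Dop_def mult_op_def ser_mult_const_left ser_smult_def)

lemma Vlin_Dop: "V_linear R (Dop R i k)"
  unfolding V_linear_def
  by (auto simp: Dop_def sR_dp sR_add sR_smult dp_add dp_smult)

lemma sum_atMost_split0: "(\<Sum>j\<le>(k::nat). g j) = g 0 + (\<Sum>j\<in>{1..k}. (g j :: 'a::comm_monoid_add))"
proof -
  have "{..k} = insert 0 {1..k}" by auto
  then show ?thesis by simp
qed

lemma Dop_comm: "r \<in> R \<Longrightarrow> commutator R (Dop R i k) r = opsum {1..k} (\<lambda>j. mult_op R (dp i j r) \<circ> Dop R i (k - j))"
proof (rule ext)
  fix f assume r: "r \<in> R"
  show "commutator R (Dop R i k) r f = opsum {1..k} (\<lambda>j. mult_op R (dp i j r) \<circ> Dop R i (k - j)) f"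
  proof (cases "f \<in> R")
    case True
    show ?thesis
    proof (rule ext)
      fix a
      have "commutator R (Dop R i k) r f a = dp i k (ser_mult r f) a - ser_mult r (dp i k f) a"
        using True r by (simp add: commutator_def Dop_in sR_mult)
      also have "\<dots> = (\<Sum>j\<le>k. ser_mult (dp i j r) (dp i (k-j) f) a) - ser_mult r (dp i k f) a"
        by (simp add: leibniz_coeff)
      also have "\<dots> = (\<Sum>j\<in>{1..k}. ser_mult (dp i j r) (dp i (k-j) f) a)"
        by (simp add: sum_atMost_split0)
      also have "\<dots> = opsum {1..k} (\<lambda>j. mult_op R (dp i j r) \<circ> Dop R i (k - j)) f a"
        using True by (simp add: opsum_def Dop_in mult_op_in sR_dp)
      finally show "commutator R (Dop R i k) r f a = opsum {1..k} (\<lambda>j. mult_op R (dp i j r) \<circ> Dop R i (k - j)) f a" .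
    qed
  next
    case False
    then show ?thesis by (simp add: commutator_def opsum_def Dop_out) (simp add: ser_zero_def)
  qed
qed

lemma Dop_diffops: "Dop R i k \<in> diffops R k"
proof (induction k rule: less_induct)
  case (less k)
  show ?case
  proof (cases k)
    case 0
    then show ?thesis using Dop_0 sR_const by auto
  next
    case (Suc m)
    have "opsum {1..k} (\<lambda>j. mult_op R (dp i j r) \<circ> Dop R i (k - j)) \<in> diffops R m" if r: "r \<in> R" for r
    proof (rule diffops_opsum)
      show "\<forall>j\<in>{1..k}. mult_op R (dp i j r) \<circ> Dop R i (k - j) \<in> diffops R m"
      proof
        fix j assume j: "j \<in> {1..k}"
        have "Dop R i (k - j) \<in> diffops R (k - j)" using less j by auto
        then have "Dop R i (k - j) \<in> diffops R m" using diffops_mono[of "k - j" m] j Suc by auto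
        then show "mult_op R (dp i j r) \<circ> Dop R i (k - j) \<in> diffops R m"
          using diffops_lmult sR_dp r by blast
      qed
    qed simp
    then show ?thesis using Suc Vlin_Dop Dop_comm by auto
  qed
qed

lemma Dop_mult: "r \<in> R \<Longrightarrow> Dop R i k \<circ> mult_op R r = opsum {..k} (\<lambda>j. mult_op R (dp i j r) \<circ> Dop R i (k - j))"
proof (rule ext)
  fix f assume r: "r \<in> R"
  show "(Dop R i k \<circ> mult_op R r) f = opsum {..k} (\<lambda>j. mult_op R (dp i j r) \<circ> Dop R i (k - j)) f"
  proof (cases "f \<in> R")
    case True
    then show ?thesis using r
      by (auto simp: opsum_def Dop_in mult_op_in sR_mult sR_dp leibniz_coeff)
  next
    case False
    then show ?thesis using sR_zero by (simp add: opsum_def Dop_in Dop_out mult_op_out) (simp add: ser_zero_def)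
  qed
qed

end


lemma smult_const: "ser_smult d (ser_const c) = ser_const (d * (c::'v::comm_semiring_1))"
  by (rule ext) (simp add: ser_smult_def ser_const_def)

context
  fixes R :: "('v::comm_ring_1) ser set" and act :: "('v ser \<Rightarrow> 'v ser) \<Rightarrow> 'm::ab_group_add \<Rightarrow> 'm"
  assumes sR: "sring R" and DM: "D_module R act"
begin

lemma in_DiffOps: "d \<in> diffops R m \<Longrightarrow> d \<in> DiffOps R"
  by (auto simp: DiffOps_def)

lemma DM_add: "d \<in> DiffOps R \<Longrightarrow> act d (x + y) = act d x + act d y"
  using DM by (simp add: D_module_def)
lemma DM_opadd: "d \<in> DiffOps R \<Longrightarrow> d' \<in> DiffOps R \<Longrightarrow> act (opadd d d') x = act d x + act d' x"
  using DM by (simp add: D_module_def opadd_def)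
lemma DM_comp: "d \<in> DiffOps R \<Longrightarrow> d' \<in> DiffOps R \<Longrightarrow> act (d \<circ> d') x = act d (act d' x)"
  using DM by (simp add: D_module_def)
lemma DM_one: "act (mult_op R (ser_const 1)) x = x"
  using DM by (simp add: D_module_def)

lemma mult_DiffOps: "s \<in> R \<Longrightarrow> mult_op R s \<in> DiffOps R"
  by (rule in_DiffOps[of _ 0]) auto

lemma act_zero_arg: "d \<in> DiffOps R \<Longrightarrow> act d 0 = 0"
  using DM_add[of d 0 0] by simp

lemma zero_opadd: "opadd (mult_op R ser_zero) (mult_op R ser_zero) = mult_op R ser_zero"
  by (simp add: zero_op[OF sR] opadd_def) (simp add: ser_add_def ser_zero_def)

lemma act_zero_op: "act (mult_op R ser_zero) x = 0"
proof -
  have z: "mult_op R ser_zero \<in> DiffOps R" using mult_DiffOps sR_zero[OF sR] by blast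
  have "act (mult_op R ser_zero) x = act (mult_op R ser_zero) x + act (mult_op R ser_zero) x"
    using DM_opadd[OF z z, of x] zero_opadd by simp
  then show ?thesis by simp
qed

lemma opsum_empty: "opsum {} F = mult_op R ser_zero"
  unfolding zero_op[OF sR] by (simp add: opsum_def ser_zero_def)

lemma act_opsum: "finite S \<Longrightarrow> (\<forall>j\<in>S. F j \<in> diffops R m) \<Longrightarrow> act (opsum S F) x = (\<Sum>j\<in>S. act (F j) x)"
proof (induction S rule: finite_induct)
  case empty
  then show ?case by (simp add: opsum_empty act_zero_op)
next
  case (insert y S)
  have eq: "opsum (insert y S) F = opadd (F y) (opsum S F)"
    using insert.hyps by (auto simp: opsum_def opadd_def ser_add_def)
  have "F y \<in> DiffOps R" using insert.prems in_DiffOps by auto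
  moreover have "opsum S F \<in> DiffOps R"
    using insert.prems insert.hyps diffops_opsum[OF sR, of S F m] in_DiffOps by auto
  ultimately show ?case using insert eq by (simp add: DM_opadd)
qed

abbreviation "Ann \<equiv> Ann_R R act"

lemma Ann_iff: "r \<in> Ann \<longleftrightarrow> r \<in> R \<and> (\<forall>x. act (mult_op R r) x = 0)"
  by (simp add: Ann_R_def)

lemma ann_zero: "ser_zero \<in> Ann"
  using Ann_iff act_zero_op sR_zero[OF sR] by blast

lemma ann_add: "r \<in> Ann \<Longrightarrow> s \<in> Ann \<Longrightarrow> ser_add r s \<in> Ann"
proof -
  assume r: "r \<in> Ann" and s: "s \<in> Ann"
  have rR: "r \<in> R" and sR': "s \<in> R" using r s Ann_iff by auto
  have eq: "mult_op R (ser_add r s) = opadd (mult_op R r) (mult_op R s)"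
  proof (rule ext)
    fix f show "mult_op R (ser_add r s) f = opadd (mult_op R r) (mult_op R s) f"
      by (cases "f \<in> R") (simp_all add: mult_op_def opadd_def ser_mult_add_left, simp add: ser_add_def ser_zero_def)
  qed
  show ?thesis using r s rR sR' eq Ann_iff DM_opadd mult_DiffOps sR_add[OF sR] by auto
qed

lemma ann_mult: "t \<in> R \<Longrightarrow> r \<in> Ann \<Longrightarrow> ser_mult t r \<in> Ann"
proof -
  assume t: "t \<in> R" and r: "r \<in> Ann"
  have rR: "r \<in> R" using r Ann_iff by auto
  have eq: "mult_op R (ser_mult t r) = mult_op R t \<circ> mult_op R r"
  proof (rule ext)
    fix f show "mult_op R (ser_mult t r) f = (mult_op R t \<circ> mult_op R r) f"
      using rR by (cases "f \<in> R") (simp_all add: mult_op_def sR_mult[OF sR] ser_mult_assoc)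
  qed
  have "act (mult_op R (ser_mult t r)) x = 0" for x
    using r t rR by (simp add: eq DM_comp mult_DiffOps Ann_iff act_zero_arg)
  then show ?thesis using Ann_iff t rR sR_mult[OF sR] by blast
qed

lemma ann_dp: "r \<in> Ann \<Longrightarrow> dp i k r \<in> Ann"
proof (induction k rule: less_induct)
  case (less k)
  have rR: "r \<in> R" using less.prems Ann_iff by auto
  define F where "F = (\<lambda>j. mult_op R (dp i j r) \<circ> Dop R i (k - j))"
  have Fd: "F j \<in> diffops R k" if "j \<le> k" for j
  proof -
    have "Dop R i (k - j) \<in> diffops R k"
      using diffops_mono[OF sR, of "k - j" k] Dop_diffops[OF sR] by auto
    then show ?thesis unfolding F_def using diffops_lmult[OF sR] sR_dp[OF sR] rR by blast
  qed
  have "act (mult_op R (dp i k r)) x = 0" for x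
  proof -
    have "act (Dop R i k \<circ> mult_op R r) x = act (Dop R i k) (act (mult_op R r) x)"
      using DM_comp[OF in_DiffOps[OF Dop_diffops[OF sR]] mult_DiffOps[OF rR]] by simp
    also have "\<dots> = 0"
    proof -
      have "act (mult_op R r) x = 0" using less.prems Ann_iff by auto
      moreover have "Dop R i k \<in> DiffOps R" using in_DiffOps Dop_diffops[OF sR] by blast
      ultimately show ?thesis using act_zero_arg by simp
    qed
    finally have z: "act (Dop R i k \<circ> mult_op R r) x = 0" .
    have "act (Dop R i k \<circ> mult_op R r) x = act (opsum {..k} F) x"
      using Dop_mult[OF sR rR] F_def by simp
    also have "\<dots> = (\<Sum>j\<le>k. act (F j) x)"
      using act_opsum[of "{..k}" F k x] Fd by auto
    also have "\<dots> = (\<Sum>j<k. act (F j) x) + act (F k) x"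
      by (simp add: lessThan_Suc_atMost[symmetric])
    also have "(\<Sum>j<k. act (F j) x) = 0"
    proof (rule sum.neutral, rule ballI)
      fix j assume j: "j \<in> {..<k}"
      have "dp i j r \<in> Ann" using less j by auto
      then have "act (mult_op R (dp i j r)) y = 0" for y using Ann_iff by auto
      moreover have "act (F j) x = act (mult_op R (dp i j r)) (act (Dop R i (k - j)) x)"
      proof -
        have a1: "mult_op R (dp i j r) \<in> DiffOps R" using mult_DiffOps sR_dp[OF sR] rR by blast
        have a2: "Dop R i (k - j) \<in> DiffOps R" using in_DiffOps Dop_diffops[OF sR] by blast
        show ?thesis unfolding F_def using DM_comp[OF a1 a2] by simp
      qed
      ultimately show "act (F j) x = 0" by simp
    qed
    also have "act (F k) x = act (mult_op R (dp i k r)) x"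
    proof -
      have a1: "mult_op R (dp i k r) \<in> DiffOps R" using mult_DiffOps sR_dp[OF sR] rR by blast
      have a2: "Dop R i 0 \<in> DiffOps R" using in_DiffOps Dop_diffops[OF sR] by blast
      have "act (F k) x = act (mult_op R (dp i k r)) (act (Dop R i 0) x)"
        unfolding F_def using DM_comp[OF a1 a2] by simp
      then show ?thesis by (simp add: Dop_0[OF sR] DM_one)
    qed
    finally have fin: "act (Dop R i k \<circ> mult_op R r) x = act (mult_op R (dp i k r)) x" by (simp add: comp_def)
    show ?thesis using z fin by simp
  qed
  then show ?case using Ann_iff sR_dp[OF sR] rR by blast
qed

lemma ann_smult: "r \<in> Ann \<Longrightarrow> ser_smult c r \<in> Ann"
  using ann_mult[of "ser_const c" r] sR_const[OF sR] by (simp add: ser_mult_const_left)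

lemma ann_const_mult: "ser_const c \<in> Ann \<Longrightarrow> ser_const (d * c) \<in> Ann"
  using ann_smult[of "ser_const c" d] by (simp add: smult_const)

lemma ann_one: "\<exists>x::'m. x \<noteq> 0 \<Longrightarrow> ser_const 1 \<notin> Ann"
  using Ann_iff DM_one by auto

end


definition deg :: "(nat \<Rightarrow>\<^sub>0 nat) \<Rightarrow> nat" where
  "deg a = (\<Sum>i\<in>pkeys a. lk a i)"

lemma deg_sup: "finite K \<Longrightarrow> pkeys a \<subseteq> K \<Longrightarrow> deg a = (\<Sum>i\<in>K. lk a i)"
  unfolding deg_def by (rule sum.mono_neutral_left) (auto simp: in_keys_iff)

lemma deg_add: "deg (b + c) = deg b + deg c"
proof -
  let ?K = "pkeys b \<union> pkeys c"
  have "deg (b + c) = (\<Sum>i\<in>?K. lk (b + c) i)" by (rule deg_sup) (simp, rule keys_add)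
  also have "\<dots> = (\<Sum>i\<in>?K. lk b i) + (\<Sum>i\<in>?K. lk c i)" by (simp add: lookup_add sum.distrib)
  also have "\<dots> = deg b + deg c" using deg_sup[of "?K" b] deg_sup[of "?K" c] by simp
  finally show ?thesis .
qed

lemma deg_sg: "deg (sg i k) = k"
proof (cases "k = 0")
  case True then show ?thesis by (simp add: deg_def)
next
  case False
  then have "pkeys (sg i k) = {i}" by simp
  then show ?thesis by (simp add: deg_def)
qed

lemma deg_zero_iff: "deg b = 0 \<longleftrightarrow> b = 0"
proof
  assume "deg b = 0"
  then have "\<forall>i\<in>pkeys b. lk b i = 0" by (simp add: deg_def)
  then have "lk b i = 0" for i by (cases "i \<in> pkeys b") (auto simp: in_keys_iff)
  then show "b = 0" by (intro poly_mapping_eqI) simp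
qed (simp add: deg_def)

lemma conv_0: "conv 0 = {(0, 0)}"
proof -
  have H: "b + c = 0 \<Longrightarrow> b = 0 \<and> c = (0::nat \<Rightarrow>\<^sub>0 nat)" for b c
  proof -
    assume bc: "b + c = 0"
    have e: "lk b i + lk c i = 0" for i
    proof -
      have "lk (b + c) i = lk 0 i" using bc by simp
      then show ?thesis by (simp add: lookup_add)
    qed
    have "b = 0" by (rule poly_mapping_eqI) (use e in simp)
    moreover have "c = 0" by (rule poly_mapping_eqI) (use e in simp)
    ultimately show ?thesis by simp
  qed
  show ?thesis
  proof (rule set_eqI)
    fix p :: "(nat \<Rightarrow>\<^sub>0 nat) \<times> (nat \<Rightarrow>\<^sub>0 nat)"
    show "p \<in> conv 0 \<longleftrightarrow> p \<in> {(0, 0)}"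
      using H[of "fst p" "snd p"] by (cases p) auto
  qed
qed

lemma deg_lt: "p \<in> conv a \<Longrightarrow> fst p \<noteq> 0 \<Longrightarrow> deg (snd p) < deg a"
proof -
  assume "p \<in> conv a" "fst p \<noteq> 0"
  then have "deg a = deg (fst p) + deg (snd p)" "deg (fst p) \<noteq> 0" by (auto simp: deg_add deg_zero_iff)
  then show ?thesis by simp
qed

function inv_ser :: "('v::comm_ring_1) ser \<Rightarrow> (nat \<Rightarrow>\<^sub>0 nat) \<Rightarrow> 'v" where
  "inv_ser g a = (if a = 0 then 1 else - (\<Sum>p\<in>{p \<in> conv a. fst p \<noteq> 0}. g (fst p) * inv_ser g (snd p)))"
  by pat_completeness auto
termination
proof (relation "measure (\<lambda>(g, a). deg a)")
  show "wf (measure (\<lambda>(g::'v ser, a). deg a))" by simp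
next
  fix g :: "'v ser" and a x
  assume "a \<noteq> 0" "x \<in> {p \<in> conv a. fst p \<noteq> 0}"
  then have "deg (snd x) < deg a" using deg_lt[of x a] by simp
  then show "((g, snd x), g, a) \<in> measure (\<lambda>(g, a). deg a)" by simp
qed

declare inv_ser.simps[simp del]

lemma inv_ser_mult: assumes g0: "g 0 = 1" shows "ser_mult g (inv_ser g) = ser_const 1"
proof
  fix a
  show "ser_mult g (inv_ser g) a = ser_const 1 a"
  proof (cases "a = 0")
    case True
    then show ?thesis using g0 by (simp add: ser_mult_alt conv_0 ser_const_def inv_ser.simps)
  next
    case False
    have split: "conv a = insert (0, a) {p \<in> conv a. fst p \<noteq> 0}" by auto
    have fin: "finite {p \<in> conv a. fst p \<noteq> 0}" by (rule finite_subset[OF _ conv_finite[of a]]) auto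
    have "ser_mult g (inv_ser g) a = g 0 * inv_ser g a + (\<Sum>p\<in>{p \<in> conv a. fst p \<noteq> 0}. g (fst p) * inv_ser g (snd p))"
      unfolding ser_mult_alt by (subst split, subst sum.insert[OF fin]) auto
    also have "\<dots> = 0" using False g0 by (subst inv_ser.simps) simp
    finally show ?thesis using False by (simp add: ser_const_def)
  qed
qed

lemma inv_ser_PS_aux: "g \<in> PS n \<Longrightarrow> inv_ser g a \<noteq> 0 \<Longrightarrow> pkeys a \<subseteq> {..<n}"
proof (induction g a rule: inv_ser.induct)
  case (1 g a)
  show ?case
  proof (cases "a = 0")
    case True then show ?thesis by simp
  next
    case False
    have "inv_ser g a = - (\<Sum>p\<in>{p \<in> conv a. fst p \<noteq> 0}. g (fst p) * inv_ser g (snd p))"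
      using False by (subst inv_ser.simps) simp
    then have "(\<Sum>p\<in>{p \<in> conv a. fst p \<noteq> 0}. g (fst p) * inv_ser g (snd p)) \<noteq> 0"
      using "1.prems"(2) by auto
    then obtain p where p: "p \<in> {p \<in> conv a. fst p \<noteq> 0}" "g (fst p) * inv_ser g (snd p) \<noteq> 0"
      by (meson sum.not_neutral_contains_not_neutral)
    then have nz: "g (fst p) \<noteq> 0" "inv_ser g (snd p) \<noteq> 0" by auto
    have "pkeys (fst p) \<subseteq> {..<n}" using nz(1) "1.prems"(1) by (auto simp: PS_def)
    moreover have "pkeys (snd p) \<subseteq> {..<n}" using "1.IH"[OF False p(1) "1.prems"(1) nz(2)] .
    moreover have "a = fst p + snd p" using p by simp
    ultimately show ?thesis using keys_add[of "fst p" "snd p"] by blast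
  qed
qed

lemma inv_ser_PS: assumes "g \<in> PS n" shows "inv_ser g \<in> PS n"
proof -
  have "\<forall>a. inv_ser g a \<noteq> 0 \<longrightarrow> pkeys a \<subseteq> {..<n}" using inv_ser_PS_aux[OF assms] by blast
  then show ?thesis by (simp add: PS_def)
qed


lemma dp_at: "dp i (lk a i) f (a - sg i (lk a i)) = (f a :: 'v::comm_semiring_1)"
  by (simp add: dp_def lk_sub_sg pm_sub_add)

lemma keys_sub_sg: "pkeys (a - sg i (lk a i)) = pkeys a - {i}"
  by (auto simp: in_keys_iff lookup_minus lk_sg split: if_splits)

lemma deg_sub: "deg (a - sg i (lk a i)) + lk a i = deg a"
proof -
  have "deg a = deg ((a - sg i (lk a i)) + sg i (lk a i))" by (simp add: pm_sub_add)
  then show ?thesis by (simp add: deg_add deg_sg)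
qed

context
  fixes R :: "('v::comm_ring_1) ser set" and act :: "('v ser \<Rightarrow> 'v ser) \<Rightarrow> 'm::ab_group_add \<Rightarrow> 'm"
  assumes sR: "sring R" and DM: "D_module R act"
begin

lemma PS_reduce: "card (pkeys a) = N \<Longrightarrow> f \<in> Ann_R R act \<Longrightarrow> (\<forall>b. f a dvd f b)
   \<Longrightarrow> \<exists>h\<in>Ann_R R act. h 0 = f a \<and> (\<forall>b. f a dvd h b)"
proof (induction N arbitrary: a f)
  case 0
  then have "a = 0" by simp
  then show ?case using 0 by blast
next
  case (Suc N)
  then obtain i where i: "i \<in> pkeys a" by (metis card.empty empty_iff nat.distinct(1) subsetI subset_empty)
  define g where "g = dp i (lk a i) f"
  define a' where "a' = a - sg i (lk a i)"
  have g: "g \<in> Ann_R R act" unfolding g_def using ann_dp[OF sR DM] Suc.prems by blast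
  have ca: "card (pkeys a') = N" unfolding a'_def keys_sub_sg using Suc.prems(1) i by simp
  have ga: "g a' = f a" unfolding g_def a'_def by (rule dp_at)
  have "\<forall>b. f a dvd g b" using Suc.prems(3) by (simp add: g_def dp_def)
  then have "\<forall>b. g a' dvd g b" using ga by simp
  then obtain h where "h \<in> Ann_R R act" "h 0 = g a'" "\<forall>b. g a' dvd h b" using Suc.IH[OF ca g] by blast
  then show ?case using ga by auto
qed

lemma MP_reduce: "card (pkeys a) = N \<Longrightarrow> f \<in> Ann_R R act \<Longrightarrow> (\<forall>b. f b \<noteq> 0 \<longrightarrow> deg b \<le> deg a)
   \<Longrightarrow> ser_const (f a) \<in> Ann_R R act"
proof (induction N arbitrary: a f)
  case 0
  then have a0: "a = 0" by simp
  have "f = ser_const (f a)"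
  proof
    fix b show "f b = ser_const (f a) b"
    proof (cases "b = 0")
      case True then show ?thesis using a0 by (simp add: ser_const_def)
    next
      case False
      then have "deg b \<noteq> 0" by (simp add: deg_zero_iff)
      then have "f b = 0" using 0 a0 by (auto simp: deg_def)
      then show ?thesis using False by (simp add: ser_const_def)
    qed
  qed
  then show ?case using 0 by simp
next
  case (Suc N)
  then obtain i where i: "i \<in> pkeys a" by (metis card.empty empty_iff nat.distinct(1) subsetI subset_empty)
  define g where "g = dp i (lk a i) f"
  define a' where "a' = a - sg i (lk a i)"
  have g: "g \<in> Ann_R R act" unfolding g_def using ann_dp[OF sR DM] Suc.prems by blast
  have ca: "card (pkeys a') = N" unfolding a'_def keys_sub_sg using Suc.prems(1) i by simp
  have ga: "g a' = f a" unfolding g_def a'_def by (rule dp_at)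
  have "\<forall>b. g b \<noteq> 0 \<longrightarrow> deg b \<le> deg a'"
  proof (intro allI impI)
    fix b assume "g b \<noteq> 0"
    then have "f (b + sg i (lk a i)) \<noteq> 0" by (auto simp: g_def dp_def)
    then have "deg (b + sg i (lk a i)) \<le> deg a" using Suc.prems(3) by blast
    then show "deg b \<le> deg a'" using deg_sub[of a i] by (simp add: deg_add deg_sg a'_def)
  qed
  then have "ser_const (g a') \<in> Ann_R R act" using Suc.IH[OF ca g] by blast
  then show ?case using ga by simp
qed

end


lemma Ann_sub: "Ann_R R act \<subseteq> R" by (auto simp: Ann_R_def)

lemma J_PS:
  fixes \<pi> :: "'v::idom" and act :: "('v ser \<Rightarrow> 'v ser) \<Rightarrow> 'm::ab_group_add \<Rightarrow> 'm"
  assumes DVR: "\<forall>x::'v. x \<noteq> 0 \<longrightarrow> (\<exists>u k. u dvd 1 \<and> x = u * \<pi> ^ k)"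
    and DM: "D_module (PS n) act" and f: "f \<in> Ann_R (PS n) act"
  shows "\<exists>c. ser_const c \<in> Ann_R (PS n) act \<and> c dvd f b"
proof (cases "f b = 0")
  case True
  then show ?thesis using ann_zero[OF sring_PS DM] by (auto simp: ser_zero_const)
next
  case False
  define K where "K = {k. \<exists>a u. f a \<noteq> 0 \<and> u dvd 1 \<and> f a = u * \<pi> ^ k}"
  have "\<exists>k. k \<in> K" using DVR False unfolding K_def by blast
  then have "(LEAST k. k \<in> K) \<in> K" by (rule LeastI_ex)
  then obtain a0 u0 where a0: "f a0 \<noteq> 0" "u0 dvd 1" "f a0 = u0 * \<pi> ^ (LEAST k. k \<in> K)"
    unfolding K_def by blast
  define k0 where "k0 = (LEAST k. k \<in> K)"
  have dv: "f a0 dvd f b'" for b'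
  proof (cases "f b' = 0")
    case True then show ?thesis by simp
  next
    case False
    then obtain u k where uk: "u dvd 1" "f b' = u * \<pi> ^ k" using DVR by blast
    then have "k \<in> K" using False unfolding K_def by blast
    then have kk: "k0 \<le> k" unfolding k0_def by (rule Least_le)
    obtain w where w: "1 = u0 * w" using a0(2) by (auto simp: dvd_def)
    have "f b' = f a0 * (w * u * \<pi> ^ (k - k0))"
    proof -
      have "f a0 * (w * u * \<pi> ^ (k - k0)) = (u0 * w) * u * (\<pi> ^ k0 * \<pi> ^ (k - k0))"
        using a0(3) unfolding k0_def by (simp add: ac_simps)
      also have "\<dots> = u * \<pi> ^ k" using w kk by (simp add: power_add[symmetric])
      finally have X: "f a0 * (w * u * \<pi> ^ (k - k0)) = u * \<pi> ^ k" .
      show ?thesis using X uk(2) by metis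
    qed
    then show ?thesis by simp
  qed
  obtain h where h: "h \<in> Ann_R (PS n) act" "h 0 = f a0" "\<forall>b. f a0 dvd h b"
    using PS_reduce[OF sring_PS DM refl f] dv by blast
  define d where "d = f a0"
  define q where "q = (\<lambda>b. SOME q. h b = d * q)"
  have hq: "h b = d * q b" for b
    unfolding q_def by (rule someI_ex) (use h(3) in \<open>auto simp: d_def dvd_def\<close>)
  have d0: "d \<noteq> 0" using a0 d_def by simp
  have q0: "q 0 = 1" using hq[of 0] h(2) d0 by (simp add: d_def)
  have hR: "h \<in> PS n" using h(1) Ann_sub by blast
  have qR: "q \<in> PS n" unfolding PS_def
  proof (intro CollectI allI impI)
    fix b assume "q b \<noteq> 0"
    then have "h b \<noteq> 0" using hq d0 by simp
    then show "pkeys b \<subseteq> {..<n}" using hR by (auto simp: PS_def)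
  qed
  have hs: "h = ser_smult d q" by (rule ext) (simp add: hq ser_smult_def)
  have iR: "inv_ser q \<in> PS n" using qR by (rule inv_ser_PS)
  have "ser_mult (inv_ser q) h \<in> Ann_R (PS n) act" using ann_mult[OF sring_PS DM iR h(1)] .
  moreover have "ser_mult (inv_ser q) h = ser_const d"
  proof -
    have "ser_mult (inv_ser q) h = ser_smult d (ser_mult q (inv_ser q))"
      by (simp add: hs ser_mult_smult_right ser_mult_comm)
    also have "\<dots> = ser_const d" by (simp add: inv_ser_mult[of q, OF q0] smult_const)
    finally show ?thesis .
  qed
  ultimately show ?thesis using dv d_def by auto
qed

lemma J_MP_aux:
  fixes act :: "('v::comm_ring_1 ser \<Rightarrow> 'v ser) \<Rightarrow> 'm::ab_group_add \<Rightarrow> 'm"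
  assumes DM: "D_module (MPolys n) act"
  shows "card {b. f b \<noteq> 0} = N \<Longrightarrow> f \<in> Ann_R (MPolys n) act \<Longrightarrow> ser_const (f b) \<in> Ann_R (MPolys n) act"
proof (induction N arbitrary: f b rule: less_induct)
  case (less N)
  have sR: "sring (MPolys n :: 'v ser set)" by (rule sring_MPolys)
  have fR: "f \<in> MPolys n" using less.prems(2) Ann_sub by blast
  define S where "S = {b. f b \<noteq> 0}"
  have finS: "finite S" using fR by (simp add: MPolys_def S_def)
  show ?case
  proof (cases "S = {}")
    case True
    then have "f b = 0" by (auto simp: S_def)
    then show ?thesis using ann_zero[OF sR DM] by (simp add: ser_zero_const)
  next
    case False
    have "Max (deg ` S) \<in> deg ` S" using finS False by simp
    then obtain a where aS: "a \<in> S" and am: "deg a = Max (deg ` S)" by auto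
    have amax: "\<forall>b. f b \<noteq> 0 \<longrightarrow> deg b \<le> deg a"
      using finS am by (auto simp: S_def)
    have ca: "ser_const (f a) \<in> Ann_R (MPolys n) act"
      using MP_reduce[OF sR DM refl less.prems(2) amax] .
    define e where "e = (\<lambda>b. if b = a then 1 else (0::'v))"
    have "f a \<noteq> 0" using aS by (simp add: S_def)
    then have ka: "pkeys a \<subseteq> {..<n}" using fR by (auto simp: MPolys_def PS_def)
    have eR: "e \<in> MPolys n"
      unfolding MPolys_def PS_def
    proof (intro CollectI conjI allI impI)
      fix b assume "e b \<noteq> 0" then show "pkeys b \<subseteq> {..<n}" using ka by (simp add: e_def split: if_splits)
    next
      show "finite {b. e b \<noteq> 0}" by (rule finite_subset[of _ "{a}"]) (auto simp: e_def)
    qed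
    have cm: "ser_const (- f a) \<in> Ann_R (MPolys n) act"
      using ann_const_mult[OF sR DM ca, of "-1"] by simp
    define f' where "f' = ser_add f (ser_mult e (ser_const (- f a)))"
    have f'A: "f' \<in> Ann_R (MPolys n) act"
      unfolding f'_def using ann_add[OF sR DM less.prems(2) ann_mult[OF sR DM eR cm]] .
    have f'e: "f' = (\<lambda>b. if b = a then 0 else f b)"
      by (rule ext) (simp add: f'_def ser_mult_const_right ser_smult_def ser_add_def e_def)
    have "{b. f' b \<noteq> 0} = S - {a}" by (auto simp: f'e S_def)
    then have "card {b. f' b \<noteq> 0} < N" using less.prems(1) finS aS S_def
      by (metis card_Diff1_less)
    then have IH: "ser_const (f' b) \<in> Ann_R (MPolys n) act" using less.IH f'A by blast
    show ?thesis
    proof (cases "b = a")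
      case True then show ?thesis using ca by simp
    next
      case False then show ?thesis using IH f'e by simp
    qed
  qed
qed


lemma unit_cancel: "1 = u * w \<Longrightarrow> c = u * x \<Longrightarrow> w * c = (x::'v::comm_ring_1)"
proof -
  assume w: "1 = u * w" and c: "c = u * x"
  have "w * c = (u * w) * x" using c by (simp add: ac_simps)
  then show ?thesis using w by simp
qed

theorem theorem3p1:
  fixes \<pi> :: "'v::idom" and n :: nat and R :: "'v ser set"
    and act :: "('v ser \<Rightarrow> 'v ser) \<Rightarrow> 'm::ab_group_add \<Rightarrow> 'm"
  assumes "mixed_char_DVR \<pi>"
    and "R = PS n \<or> R = MPolys n"
    and "D_module R act"
    and "\<exists>x::'m. x \<noteq> 0"
  shows "Ann_R R act = {ser_zero}
       \<or> (\<exists>l::nat. l \<ge> 1 \<and> Ann_R R act = {ser_smult (\<pi> ^ l) f | f. f \<in> R})"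
proof -
  have sR: "sring R" using assms(2) sring_PS sring_MPolys by blast
  note DM = assms(3)
  have DVR: "\<forall>x::'v. x \<noteq> 0 \<longrightarrow> (\<exists>u k. u dvd 1 \<and> x = u * \<pi> ^ k)" and pi0: "\<pi> \<noteq> 0"
    using assms(1) by (auto simp: mixed_char_DVR_def)
  have P: "\<exists>c. ser_const c \<in> Ann_R R act \<and> c dvd f b" if "f \<in> Ann_R R act" for f b
  proof (cases "R = PS n")
    case True then show ?thesis using J_PS[OF DVR, of n act f b] DM that by simp
  next
    case False then have R: "R = MPolys n" using assms(2) by blast
    have "ser_const (f b) \<in> Ann_R R act"
      using J_MP_aux[where act=act and n=n and f=f and N="card {b. f b \<noteq> 0}" and b=b] DM that R by simp
    then show ?thesis by (intro exI[of _ "f b"]) simp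
  qed
  have powA: "\<exists>k. c = u * \<pi> ^ k \<and> ser_const (\<pi> ^ k) \<in> Ann_R R act"
    if c: "ser_const c \<in> Ann_R R act" "c \<noteq> 0" "u dvd 1" "c = u * \<pi> ^ k" for c u k
  proof -
    obtain w where w: "1 = u * w" using c(3) by (auto simp: dvd_def)
    have A: "ser_const (w * c) \<in> Ann_R R act" by (rule ann_const_mult[OF sR DM c(1)])
    have B: "w * c = \<pi> ^ k" using unit_cancel[OF w c(4)] .
    have "ser_const (\<pi> ^ k) \<in> Ann_R R act" using A unfolding B .
    then show ?thesis using c(4) by blast
  qed
  show ?thesis
  proof (cases "Ann_R R act = {ser_zero}")
    case True then show ?thesis by blast
  next
    case False
    have z: "ser_zero \<in> Ann_R R act" by (rule ann_zero[OF sR DM])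
    then obtain f where f: "f \<in> Ann_R R act" "f \<noteq> ser_zero" using False by blast
    then obtain b where fb: "f b \<noteq> 0" by (auto simp: ser_zero_def)
    obtain c where c: "ser_const c \<in> Ann_R R act" "c dvd f b" using P[OF f(1)] by blast
    have c0: "c \<noteq> 0" using c(2) fb by auto
    obtain u k where uk: "u dvd 1" "c = u * \<pi> ^ k" using DVR c0 by blast
    have Ek: "\<exists>k. ser_const (\<pi> ^ k) \<in> Ann_R R act" using powA[OF c(1) c0 uk] by blast
    define l where "l = (LEAST l. ser_const (\<pi> ^ l) \<in> Ann_R R act)"
    have lA: "ser_const (\<pi> ^ l) \<in> Ann_R R act" unfolding l_def using Ek by (rule LeastI_ex)
    have l1: "l \<ge> 1"
    proof (rule ccontr)
      assume "\<not> l \<ge> 1" then have "l = 0" by simp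
      then show False using lA ann_one[OF sR DM assms(4)] by simp
    qed
    have "Ann_R R act = {ser_smult (\<pi> ^ l) f | f. f \<in> R}"
    proof
      show "{ser_smult (\<pi> ^ l) f | f. f \<in> R} \<subseteq> Ann_R R act"
      proof
        fix g assume "g \<in> {ser_smult (\<pi> ^ l) f | f. f \<in> R}"
        then obtain h where h: "h \<in> R" "g = ser_smult (\<pi> ^ l) h" by blast
        then show "g \<in> Ann_R R act" using ann_mult[OF sR DM h(1) lA] by (simp add: ser_mult_const_right)
      qed
    next
      show "Ann_R R act \<subseteq> {ser_smult (\<pi> ^ l) f | f. f \<in> R}"
      proof
        fix g assume g: "g \<in> Ann_R R act"
        have gR: "g \<in> R" using g Ann_sub by blast
        have dv: "\<pi> ^ l dvd g b" for b
        proof -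
          obtain c where c: "ser_const c \<in> Ann_R R act" "c dvd g b" using P[OF g] by blast
          show ?thesis
          proof (cases "c = 0")
            case True then show ?thesis using c by simp
          next
            case False
            obtain u k where uk: "u dvd 1" "c = u * \<pi> ^ k" using DVR False by blast
            obtain k' where k': "c = u * \<pi> ^ k'" "ser_const (\<pi> ^ k') \<in> Ann_R R act"
              using powA[OF c(1) False uk] by blast
            have "l \<le> k'" unfolding l_def using k'(2) by (rule Least_le)
            then have "\<pi> ^ l dvd \<pi> ^ k'" by (rule le_imp_power_dvd)
            also have "\<pi> ^ k' dvd c" using k'(1) by simp
            also have "c dvd g b" by (rule c(2))
            finally show ?thesis .
          qed
        qed
        define q where "q = (\<lambda>b. SOME q. g b = \<pi> ^ l * q)"
        have gq: "g b = \<pi> ^ l * q b" for b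
          unfolding q_def by (rule someI_ex) (use dv[of b] in \<open>auto simp: dvd_def\<close>)
        have pl: "\<pi> ^ l \<noteq> 0" using pi0 by simp
        have supp: "g b \<noteq> 0" if "q b \<noteq> 0" for b using gq pl that by simp
        have gPS: "g \<in> PS n" using gR assms(2) by (auto simp: MPolys_def)
        have qPS: "q \<in> PS n" unfolding PS_def
        proof (intro CollectI allI impI)
          fix b assume "q b \<noteq> 0"
          then have "g b \<noteq> 0" by (rule supp)
          then show "pkeys b \<subseteq> {..<n}" using gPS by (auto simp: PS_def)
        qed
        have qR: "q \<in> R"
        proof (cases "R = PS n")
          case True then show ?thesis using qPS by simp
        next
          case False then have R: "R = MPolys n" using assms(2) by blast
          have "finite {b. g b \<noteq> 0}" using gR R by (simp add: MPolys_def)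
          then have "finite {b. q b \<noteq> 0}" by (rule finite_subset[rotated]) (use supp in blast)
          then show ?thesis using qPS R by (simp add: MPolys_def)
        qed
        have "g = ser_smult (\<pi> ^ l) q" by (rule ext) (simp add: gq ser_smult_def)
        then show "g \<in> {ser_smult (\<pi> ^ l) f | f. f \<in> R}" using qR by blast
      qed
    qed
    then show ?thesis using l1 by blast
  qed
qed


end
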